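(* Let $P(z) \in \mathbb{C}[z, z^{-1}]$ be a Laurent polynomial and let $A \subseteq [0,1]$ be a closed set such that $P(e^{2\pi i t}) \neq 0$ for all $t \in A$. Then \[ \lim_{k\to\infty} \frac{1}{k!} \int_A \log^k \left|P\left(e^{2\pi i t}\right)\right| \, dt = 0. \]
   Context: $\log^k x$ means $(\log x)^k$; the integral is with respect to Lebesgue measure. *)

theory Defs
  imports "HOL-Analysis.Analysis" "HOL-Computational_Algebra.Polynomial"
begin

text \<open>A Laurent polynomial P in C[z, z^-1] is represented as P(z) = z^(-m) * Q(z)
  with Q a complex polynomial and m a natural number; every Laurent polynomial
  has such a representation.\<close>
definition laurent_eval :: "nat \<Rightarrow> complex poly \<Rightarrow> complex \<Rightarrow> complex" where
  "laurent_eval m Q z = poly Q z / z ^ m"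

end

theory Submission
  imports Defs
begin

theorem lemma1:
  fixes m :: nat and Q :: "complex poly" and A :: "real set"
  assumes "closed A" and "A \<subseteq> {0..1}"
    and "\<forall>t\<in>A. laurent_eval m Q (exp (2 * pi * \<i> * complex_of_real t)) \<noteq> 0"
  shows "(\<lambda>k. (1 / fact k) * (LINT t:A|lborel.
            (ln (cmod (laurent_eval m Q (exp (2 * pi * \<i> * complex_of_real t))))) ^ k))
         \<longlonglongrightarrow> 0"
proof -
  define f where "f t = ln (cmod (laurent_eval m Q (exp (2 * pi * \<i> * complex_of_real t))))" for t
  have cA: "compact A" using assms(1,2) by (meson compact_Icc compact_imp_bounded bounded_subset compact_eq_bounded_closed)
  have cont: "continuous_on A f"
    unfolding f_def laurent_eval_def
    using assms(3) unfolding laurent_eval_def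
    by (auto intro!: continuous_intros)
  obtain M where M: "\<And>t. t \<in> A \<Longrightarrow> norm (f t) \<le> M"
    using compact_imp_bounded[OF compact_continuous_image[OF cont cA]]
    unfolding bounded_iff by auto
  have M0: "0 \<le> max M 0" by simp
  define B where "B = max M 0"
  have MB: "\<And>t. t \<in> A \<Longrightarrow> \<bar>f t\<bar> \<le> B" using M unfolding B_def by force
  have measA: "measure lborel A \<le> 1"
  proof -
    have "measure lborel A \<le> measure lborel {0..1::real}"
      using assms(2) by (intro measure_mono_fmeasurable) (auto simp: assms(1) borel_closed fmeasurable_def)
    then show ?thesis by simp
  qed
  have finA: "emeasure lborel A < top"
  proof -
    have "emeasure lborel A \<le> emeasure lborel {0..1::real}"
      using assms(2) by (intro emeasure_mono) auto
    then have "emeasure lborel A \<le> 1" by simp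
    then show ?thesis using ennreal_one_less_top by (rule le_less_trans)
  qed
  have bound: "\<bar>LINT t:A|lborel. f t ^ k\<bar> \<le> B ^ k" for k
  proof -
    have int: "integrable lborel (\<lambda>t. indicator A t *\<^sub>R f t ^ k)"
      by (rule borel_integrable_compact[OF cA]) (auto intro!: continuous_intros cont)
    have int2: "integrable lborel (\<lambda>t. indicator A t * B ^ k)"
      using finA by (intro integrable_mult_left integrable_real_indicator) (auto simp: borel_closed assms(1))
    have "\<bar>LINT t:A|lborel. f t ^ k\<bar> = norm (LINT t|lborel. indicator A t *\<^sub>R f t ^ k)"
      by (simp add: set_lebesgue_integral_def)
    also have "\<dots> \<le> (LINT t|lborel. norm (indicator A t *\<^sub>R f t ^ k))"
      by (rule integral_norm_bound)
    also have "\<dots> \<le> (LINT t|lborel. indicator A t * B ^ k)"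
    proof (rule integral_mono)
      show "integrable lborel (\<lambda>t. norm (indicator A t *\<^sub>R f t ^ k))" using int by auto
      show "integrable lborel (\<lambda>t. indicator A t * B ^ k)" by (rule int2)
      fix t show "norm (indicator A t *\<^sub>R f t ^ k) \<le> indicator A t * B ^ k"
      proof (cases "t \<in> A")
        case True
        then have "\<bar>f t\<bar> ^ k \<le> B ^ k" using MB[of t] by (intro power_mono) auto
        then show ?thesis using True by (simp add: power_abs)
      qed simp
    qed
    also have "\<dots> = B ^ k * measure lborel A" by simp
    also have "\<dots> \<le> B ^ k * 1" using measA M0 B_def by (intro mult_left_mono) auto
    finally show ?thesis by simp
  qed
  have lim: "(\<lambda>k. B ^ k / fact k) \<longlonglongrightarrow> 0"
  proof -
    have "(\<lambda>k. inverse (fact k) *\<^sub>R B ^ k) = (\<lambda>k. B ^ k / fact k)"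
      by (rule ext) (simp add: field_simps)
    then show ?thesis using summable_LIMSEQ_zero[OF summable_exp_generic[of B]] by simp
  qed
  show ?thesis
    unfolding f_def[symmetric]
  proof (rule Lim_null_comparison[OF _ lim])
    show "\<forall>\<^sub>F k in sequentially. norm (1 / fact k * (LINT t:A|lborel. f t ^ k)) \<le> B ^ k / fact k"
    proof (intro always_eventually allI)
      fix k :: nat
      have "norm (1 / fact k * (LINT t:A|lborel. f t ^ k)) = \<bar>LINT t:A|lborel. f t ^ k\<bar> / fact k"
        by (simp add: abs_mult)
      also have "\<dots> \<le> B ^ k / fact k"
        by (rule divide_right_mono[OF bound]) simp
      finally show "norm (1 / fact k * (LINT t:A|lborel. f t ^ k)) \<le> B ^ k / fact k" .
    qed
  qed
qed

end
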